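(* Let $z_0\in T$ and $k\in\{0,1,2,\dots\}\cup\{\infty\}$. Then $U_3(T,z_0,k)$ is a dense $G_\delta$ subset of $C^k(T)$.
   Context: $D=\{|z|<1\}$, $T=\{|z|=1\}$, $D(z_0,r)$ the open disk of center $z_0$ and radius $r$. For $k\in\{0,1,2,\dots\}\cup\{\infty\}$, $C^k(T)$ is the space of $u:T\to\mathbb{C}$ such that $\theta\mapsto u(e^{i\theta})$ is $k$ times continuously differentiable on $\mathbb{R}$, with the topology given by the seminorms $\sup_{\theta\in\mathbb{R}}|\frac{d^l}{d\theta^l}u(e^{i\theta})|$ for all integers $0\le l\le k$. For $z_0\in T$ and $r>0$ put $P(z_0,r)=D(z_0,r)\cap D$. $U_3(T,z_0,k)$ is the set of $u\in C^k(T)$ for which there exist no $r>0$ and no continuous $h:T\cup P(z_0,r)\to\mathbb{C}$ holomorphic on $P(z_0,r)$ with $h=u$ on $D(z_0,r)\cap T$. *)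

theory Defs
  imports "HOL-Analysis.Analysis" "HOL-Library.Extended_Nat"
begin

fun iter_deriv :: "nat \<Rightarrow> (real \<Rightarrow> complex) \<Rightarrow> real \<Rightarrow> complex" where
  "iter_deriv 0 g = g"
| "iter_deriv (Suc l) g = (\<lambda>x. vector_derivative (iter_deriv l g) (at x))"

definition circ_param :: "(complex \<Rightarrow> complex) \<Rightarrow> real \<Rightarrow> complex" where
  "circ_param u = (\<lambda>\<theta>. u (cis \<theta>))"

definition Ck_real :: "enat \<Rightarrow> (real \<Rightarrow> complex) \<Rightarrow> bool" where
  "Ck_real k g \<longleftrightarrow>
     (\<forall>l. enat l < k \<longrightarrow> (\<forall>x. iter_deriv l g differentiable (at x))) \<and>
     (\<forall>l. enat l \<le> k \<longrightarrow> continuous_on UNIV (iter_deriv l g))"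

text \<open>C^k(T): functions on T (represented as functions on C vanishing off T).\<close>
definition Ck_T :: "enat \<Rightarrow> (complex \<Rightarrow> complex) set" where
  "Ck_T k = {u. (\<forall>z. z \<notin> sphere 0 1 \<longrightarrow> u z = 0) \<and> Ck_real k (circ_param u)}"

definition seminorm_T :: "nat \<Rightarrow> (complex \<Rightarrow> complex) \<Rightarrow> real" where
  "seminorm_T l u = (SUP \<theta>. cmod (iter_deriv l (circ_param u) \<theta>))"

definition Ck_topology :: "enat \<Rightarrow> (complex \<Rightarrow> complex) topology" where
  "Ck_topology k = topology_generated_by
     {{v \<in> Ck_T k. seminorm_T l (v - u) < \<epsilon>} | l u \<epsilon>.
        enat l \<le> k \<and> u \<in> Ck_T k \<and> \<epsilon> > 0}"

definition P_set :: "complex \<Rightarrow> real \<Rightarrow> complex set" where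
  "P_set z0 r = ball z0 r \<inter> ball 0 1"

definition U3 :: "complex \<Rightarrow> enat \<Rightarrow> (complex \<Rightarrow> complex) set" where
  "U3 z0 k = {u \<in> Ck_T k. \<not> (\<exists>r>0. \<exists>h.
       continuous_on (sphere 0 1 \<union> P_set z0 r) h \<and> h holomorphic_on P_set z0 r \<and>
       (\<forall>z \<in> ball z0 r \<inter> sphere 0 1. h z = u z))}"

end

theory Submission
  imports Defs "HOL-Complex_Analysis.Complex_Analysis"
begin


lemma vd_shift_iff:
  fixes f :: "real \<Rightarrow> complex"
  assumes per: "\<And>x. f (x + p) = f x"
  shows "(f has_vector_derivative D) (at (x + p)) \<longleftrightarrow> (f has_vector_derivative D) (at x)"
proof
  assume a: "(f has_vector_derivative D) (at (x + p))"
  have "((\<lambda>y. y + p) has_vector_derivative 1) (at x)"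
    by (auto intro!: derivative_eq_intros)
  from vector_diff_chain_at[OF this, of f D] a
  have "((f \<circ> (\<lambda>y. y + p)) has_vector_derivative D) (at x)" by simp
  moreover have "f \<circ> (\<lambda>y. y + p) = f" using per by (auto simp: o_def)
  ultimately show "(f has_vector_derivative D) (at x)" by simp
next
  assume a: "(f has_vector_derivative D) (at x)"
  have "((\<lambda>y. y - p) has_vector_derivative 1) (at (x + p))"
    by (auto intro!: derivative_eq_intros)
  from vector_diff_chain_at[OF this, of f D] a
  have "((f \<circ> (\<lambda>y. y - p)) has_vector_derivative D) (at (x+p))" by simp
  moreover have "f \<circ> (\<lambda>y. y - p) = f" using per[of "_ - p"] by (auto simp: o_def)
  ultimately show "(f has_vector_derivative D) (at (x + p))" by simp
qed

lemma vd_periodic: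
  fixes f :: "real \<Rightarrow> complex"
  assumes per: "\<And>x. f (x + p) = f x"
  shows "vector_derivative f (at (x + p)) = vector_derivative f (at x)"
  unfolding vector_derivative_def using vd_shift_iff[where f=f and p=p, OF per] by simp

lemma iter_deriv_periodic:
  assumes per: "\<And>x. g (x + p) = g x"
  shows "iter_deriv l g (x + p) = iter_deriv l g x"
  using per
proof (induction l arbitrary: x)
  case 0 then show ?case by simp
next
  case (Suc l)
  then show ?case by (simp add: vd_periodic)
qed

lemma periodic_int:
  fixes g :: "real \<Rightarrow> 'a"
  assumes per: "\<And>x. g (x + p) = g x"
  shows "g (x + of_int n * p) = g x"
proof -
  have nat: "g (y + of_nat m * p) = g y" for y m
  proof (induction m)
    case (Suc m)
    have "g (y + of_nat (Suc m) * p) = g ((y + of_nat m * p) + p)" by (simp add: algebra_simps)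
    also have "\<dots> = g y" using per Suc by simp
    finally show ?case .
  qed simp
  show ?thesis
  proof (cases "n \<ge> 0")
    case True
    then obtain m where "n = int m" by (metis nonneg_eq_int)
    then show ?thesis using nat by simp
  next
    case False
    then obtain m where m: "n = - int m" by (metis nat_0_le neg_0_le_iff_le nle_le of_nat_0_le_iff verit_minus_simplify(4))
    have "g (x + of_int n * p) = g (x + of_int n * p + of_nat m * p)" using nat by simp
    also have "\<dots> = g x" using m by simp
    finally show ?thesis .
  qed
qed

lemma periodic_bounded:
  fixes g :: "real \<Rightarrow> complex"
  assumes per: "\<And>x. g (x + 2*pi) = g x" and cont: "continuous_on UNIV g"
  shows "\<exists>B. \<forall>x. cmod (g x) \<le> B"
proof -
  have "compact (g ` {0..2*pi})"
    by (intro compact_continuous_image continuous_on_subset[OF cont]) auto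
  then obtain B where B: "\<And>y. y \<in> g ` {0..2*pi} \<Longrightarrow> norm y \<le> B"
    using compact_imp_bounded bounded_iff by metis
  show ?thesis
  proof (intro exI allI)
    fix x
    define n where "n = \<lfloor>x / (2*pi)\<rfloor>"
    define y where "y = x - of_int n * (2*pi)"
    have "of_int n \<le> x / (2*pi)" "x / (2*pi) < of_int n + 1" unfolding n_def by linarith+
    then have "y \<in> {0..2*pi}" unfolding y_def
      by (auto simp: field_simps)
    moreover have "g x = g y" 
      using periodic_int[where g=g and p="2*pi", OF per, of y n] unfolding y_def by simp
    ultimately show "cmod (g x) \<le> B" using B by auto
  qed
qed

lemma circ_param_periodic: "circ_param u (x + 2*pi) = circ_param u x"
  unfolding circ_param_def by (simp add: cis.ctr)

lemma Ck_bounded: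
  assumes "u \<in> Ck_T k" "enat l \<le> k"
  shows "\<exists>B. \<forall>x. cmod (iter_deriv l (circ_param u) x) \<le> B"
  using assms
  by (intro periodic_bounded iter_deriv_periodic circ_param_periodic)
     (auto simp: Ck_T_def Ck_real_def)

lemma iter_deriv_lin:
  assumes g: "Ck_real k g" and h: "Ck_real k h"
  shows "enat l \<le> k \<Longrightarrow> iter_deriv l (\<lambda>x. g x + c * h x) = (\<lambda>x. iter_deriv l g x + c * iter_deriv l h x)"
proof (induction l)
  case 0 then show ?case by simp
next
  case (Suc l)
  then have lk: "enat l < k" using Suc_ile_eq by blast
  then have IH: "iter_deriv l (\<lambda>x. g x + c * h x) = (\<lambda>x. iter_deriv l g x + c * iter_deriv l h x)"
    using Suc by (simp add: order_less_imp_le)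
  have dg: "iter_deriv l g differentiable (at x)" and dh: "iter_deriv l h differentiable (at x)" for x
    using g h lk by (auto simp: Ck_real_def)
  show ?case
  proof (rule ext)
    fix x
    have "((\<lambda>x. iter_deriv l g x + c * iter_deriv l h x) has_vector_derivative
       (vector_derivative (iter_deriv l g) (at x) + c * vector_derivative (iter_deriv l h) (at x))) (at x)"
      using dg[of x] dh[of x]
      by (intro has_vector_derivative_add has_vector_derivative_mult_right)
         (auto simp: vector_derivative_works)
    then show "iter_deriv (Suc l) (\<lambda>x. g x + c * h x) x =
          iter_deriv (Suc l) g x + c * iter_deriv (Suc l) h x"
      by (simp add: IH vector_derivative_at)
  qed
qed

lemma Ck_lin:
  assumes g: "Ck_real k g" and h: "Ck_real k h"
  shows "Ck_real k (\<lambda>x. g x + c * h x)"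
  unfolding Ck_real_def
proof (intro conjI allI impI)
  fix l x assume lk: "enat l < k"
  then have "enat l \<le> k" by simp
  then show "iter_deriv l (\<lambda>x. g x + c * h x) differentiable at x"
    using g h lk by (auto simp: iter_deriv_lin[OF g h] Ck_real_def)
next
  fix l assume lk: "enat l \<le> k"
  then show "continuous_on UNIV (iter_deriv l (\<lambda>x. g x + c * h x))"
    using g h lk by (auto simp: iter_deriv_lin[OF g h] Ck_real_def intro!: continuous_intros)
qed

lemma CkT_lin:
  assumes "u \<in> Ck_T k" "v \<in> Ck_T k"
  shows "(\<lambda>z. u z + c * v z) \<in> Ck_T k"
proof -
  have "circ_param (\<lambda>z. u z + c * v z) = (\<lambda>x. circ_param u x + c * circ_param v x)"
    by (simp add: circ_param_def)
  then show ?thesis using assms Ck_lin[of k "circ_param u" "circ_param v" c]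
    by (auto simp: Ck_T_def)
qed

lemma CkT_diff:
  assumes "u \<in> Ck_T k" "v \<in> Ck_T k"
  shows "u - v \<in> Ck_T k"
proof -
  have "u - v = (\<lambda>z. u z + (-1) * v z)" by auto
  then show ?thesis using CkT_lin[OF assms, of "-1"] by simp
qed


lemma sn_le:
  assumes "w \<in> Ck_T k" "enat l \<le> k"
  shows "cmod (iter_deriv l (circ_param w) x) \<le> seminorm_T l w"
proof -
  obtain B where "\<forall>x. cmod (iter_deriv l (circ_param w) x) \<le> B" using Ck_bounded[OF assms] by blast
  then have "bdd_above (range (\<lambda>x. cmod (iter_deriv l (circ_param w) x)))" by (auto intro: bdd_aboveI)
  then show ?thesis unfolding seminorm_T_def by (intro cSUP_upper) auto
qed

lemma sn_least:
  assumes "\<And>x. cmod (iter_deriv l (circ_param w) x) \<le> M"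
  shows "seminorm_T l w \<le> M"
  unfolding seminorm_T_def using assms by (intro cSUP_least) auto

lemma sn_zero: "seminorm_T l (u - u) = 0"
proof -
  have "iter_deriv l (\<lambda>x. 0::complex) = (\<lambda>x. 0)" for l
    by (induction l) auto
  moreover have "circ_param (u - u) = (\<lambda>x. 0)" by (auto simp: circ_param_def)
  ultimately show ?thesis by (simp add: seminorm_T_def)
qed

lemma Ck_topspace: "topspace (Ck_topology k) = Ck_T k"
proof -
  let ?S = "{{v \<in> Ck_T k. seminorm_T l (v - u) < \<epsilon>} | l u \<epsilon>.
        enat l \<le> k \<and> u \<in> Ck_T k \<and> \<epsilon> > 0}"
  have A: "\<Union>?S \<subseteq> Ck_T k" by (rule Union_least) auto
  have B: "u \<in> \<Union>?S" if u: "u \<in> Ck_T k" for u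
  proof -
    have "enat 0 \<le> k" by (simp add: zero_enat_def[symmetric])
    then have "{v \<in> Ck_T k. seminorm_T 0 (v - u) < 1} \<in> ?S" using u
      by (intro CollectI exI[of _ 0] exI[of _ u] exI[of _ "1::real"]) simp
    moreover have "u \<in> {v \<in> Ck_T k. seminorm_T 0 (v - u) < 1}" using u by (simp add: sn_zero)
    ultimately show ?thesis by blast
  qed
  have T: "topspace (Ck_topology k) = \<Union>?S" unfolding Ck_topology_def by (rule topology_generated_by_topspace)
  show ?thesis unfolding T using A B by (intro equalityI subsetI) auto
qed

lemma Ck_basis_open:
  assumes "enat l \<le> k" "u \<in> Ck_T k" "\<epsilon> > 0"
  shows "openin (Ck_topology k) {v \<in> Ck_T k. seminorm_T l (v - u) < \<epsilon>}"
  unfolding Ck_topology_def by (rule topology_generated_by_Basis) (use assms in blast)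

lemma sn_triangle:
  assumes "a \<in> Ck_T k" "b \<in> Ck_T k" "c \<in> Ck_T k" "enat l \<le> k"
  shows "seminorm_T l (a - c) \<le> seminorm_T l (a - b) + seminorm_T l (b - c)"
proof (rule sn_least)
  fix x
  have ab: "a - b \<in> Ck_T k" and bc: "b - c \<in> Ck_T k" using CkT_diff[OF assms(1,2)] CkT_diff[OF assms(2,3)] by auto
  have eq: "circ_param (a - c) = (\<lambda>x. circ_param (a - b) x + 1 * circ_param (b - c) x)"
    by (auto simp: circ_param_def)
  have ck1: "Ck_real k (circ_param (a - b))" "Ck_real k (circ_param (b - c))"
    using ab bc unfolding Ck_T_def by blast+
  have "iter_deriv l (\<lambda>x. circ_param (a - b) x + 1 * circ_param (b - c) x) =
     (\<lambda>x. iter_deriv l (circ_param (a - b)) x + 1 * iter_deriv l (circ_param (b - c)) x)"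
    by (rule iter_deriv_lin[OF ck1 assms(4)])
  then have e2: "iter_deriv l (circ_param (a - c)) x = iter_deriv l (circ_param (a - b)) x + iter_deriv l (circ_param (b - c)) x"
    unfolding eq by simp
  have "cmod (iter_deriv l (circ_param (a - c)) x) = cmod (iter_deriv l (circ_param (a - b)) x + iter_deriv l (circ_param (b - c)) x)"
    using e2 by simp
  also have "\<dots> \<le> cmod (iter_deriv l (circ_param (a - b)) x) + cmod (iter_deriv l (circ_param (b - c)) x)"
    by (rule norm_triangle_ineq)
  also have "\<dots> \<le> seminorm_T l (a - b) + seminorm_T l (b - c)"
    using sn_le[OF ab assms(4)] sn_le[OF bc assms(4)] by (intro add_mono)
  finally show "cmod (iter_deriv l (circ_param (a - c)) x) \<le> seminorm_T l (a - b) + seminorm_T l (b - c)" .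
qed

lemma Ck_nbhd:
  assumes "openin (Ck_topology k) W" "u \<in> W"
  shows "\<exists>L \<epsilon>. \<epsilon> > 0 \<and> (\<forall>v\<in>Ck_T k. (\<forall>l\<le>L. enat l \<le> k \<longrightarrow> seminorm_T l (v - u) < \<epsilon>) \<longrightarrow> v \<in> W)"
proof -
  have "generate_topology_on {{v \<in> Ck_T k. seminorm_T l (v - u) < \<epsilon>} | l u \<epsilon>.
        enat l \<le> k \<and> u \<in> Ck_T k \<and> \<epsilon> > 0} W"
    using assms(1) unfolding Ck_topology_def by (rule openin_topology_generated_by)
  then show ?thesis using assms(2)
  proof (induction arbitrary: u)
    case Empty then show ?case by simp
  next
    case (Int a b)
    have ua: "u \<in> a" and ub: "u \<in> b" using Int.prems by auto
    obtain L1 e1 where 1: "e1 > 0" "\<forall>v\<in>Ck_T k. (\<forall>l\<le>L1. enat l \<le> k \<longrightarrow> seminorm_T l (v - u) < e1) \<longrightarrow> v \<in> a"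
      using Int.IH(1)[OF ua] by blast
    obtain L2 e2 where 2: "e2 > 0" "\<forall>v\<in>Ck_T k. (\<forall>l\<le>L2. enat l \<le> k \<longrightarrow> seminorm_T l (v - u) < e2) \<longrightarrow> v \<in> b"
      using Int.IH(2)[OF ub] by blast
    show ?case
    proof (intro exI[of _ "max L1 L2"] exI[of _ "min e1 e2"] conjI ballI impI)
      show "min e1 e2 > 0" using 1 2 by simp
      fix v assume v: "v \<in> Ck_T k" and h: "\<forall>l\<le>max L1 L2. enat l \<le> k \<longrightarrow> seminorm_T l (v - u) < min e1 e2"
      have "v \<in> a" using 1(2) v h by fastforce
      moreover have "v \<in> b" using 2(2) v h by fastforce
      ultimately show "v \<in> a \<inter> b" by blast
    qed
  next
    case (UN K)
    then obtain k0 where "k0 \<in> K" "u \<in> k0" by blast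
    with UN.IH[OF this] show ?case by blast
  next
    case (Basis s)
    from Basis.hyps obtain l0 u0 e0 where s: "s = {v \<in> Ck_T k. seminorm_T l0 (v - u0) < e0}"
       and l0: "enat l0 \<le> k" and u0: "u0 \<in> Ck_T k" by (auto simp only: mem_Collect_eq)
    have u: "u \<in> Ck_T k" "seminorm_T l0 (u - u0) < e0" using Basis.prems unfolding s by auto
    show ?case
    proof (intro exI conjI ballI impI)
      show "e0 - seminorm_T l0 (u - u0) > 0" using u by simp
      fix v assume v: "v \<in> Ck_T k" and h: "\<forall>l\<le>l0. enat l \<le> k \<longrightarrow> seminorm_T l (v - u) < e0 - seminorm_T l0 (u - u0)"
      have "seminorm_T l0 (v - u0) \<le> seminorm_T l0 (v - u) + seminorm_T l0 (u - u0)"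
        by (rule sn_triangle[OF v u(1) u0 l0])
      also have "\<dots> < e0" using h l0 by auto
      finally show "v \<in> s" using s v by simp
    qed
  qed
qed


lemma lens_Re_bound:
  fixes z c :: complex
  assumes c: "cmod c = 1" and z: "cmod z \<le> 1"
  shows "Re (z * cnj c - 1) \<le> - ((cmod (z - c)) ^ 2 / 2)"
proof -
  define a where "a = z * cnj c - 1"
  have cc: "c * cnj c = 1" using c by (metis complex_norm_square mult.commute norm_one of_real_1 power_one)
  have "a = (z - c) * cnj c" unfolding a_def using cc by (simp add: algebra_simps)
  then have na: "cmod a = cmod (z - c)" using c by (simp add: norm_mult)
  have "cmod (a + 1) = cmod z" unfolding a_def using c by (simp add: norm_mult)
  then have "cmod (a + 1) ^2 \<le> 1" using z by (simp add: power_le_one)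
  then have "(Re a + 1)^2 + (Im a)^2 \<le> 1" by (simp add: cmod_power2)
  moreover have "(Re a)^2 + (Im a)^2 = cmod (z - c) ^2" using na by (metis cmod_power2)
  ultimately have "2 * Re a + cmod (z - c) ^2 \<le> 0" by (simp add: power2_eq_square algebra_simps)
  then show ?thesis unfolding a_def by simp
qed

lemma lens_est:
  fixes g :: "complex \<Rightarrow> complex" and c :: complex and \<rho> B \<delta> M :: real
  assumes c: "cmod c = 1" and \<rho>: "\<rho> > 0" and \<rho>1: "\<rho> \<le> 1"
    and cont: "continuous_on (cball c \<rho> \<inter> cball 0 1) g"
    and hol: "g holomorphic_on (ball c \<rho> \<inter> ball 0 1)"
    and gB: "\<And>z. z \<in> cball c \<rho> \<inter> cball 0 1 \<Longrightarrow> cmod (g z) \<le> B"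
    and g\<delta>: "\<And>z. z \<in> cball c \<rho> \<inter> sphere 0 1 \<Longrightarrow> cmod (g z) \<le> \<delta>"
    and M: "M \<ge> 0"
    and z: "z \<in> cball 0 1" "dist c z \<le> \<rho>^2/4"
  shows "cmod (g z) \<le> max \<delta> (B * exp (-M)) * exp (M/2)"
proof -
  define S where "S = cball c \<rho> \<inter> cball 0 1"
  define K where "K = 2 * M / \<rho>^2"
  have K: "K \<ge> 0" unfolding K_def using M by simp
  define G where "G = (\<lambda>z. g z * exp (of_real K * (z * cnj c - 1)))"
  have nG: "cmod (G w) = cmod (g w) * exp (K * Re (w * cnj c - 1))" for w
    unfolding G_def by (simp add: norm_mult)
  have Re0: "Re (w * cnj c - 1) \<le> 0" if "w \<in> cball 0 1" for w
    using lens_Re_bound[OF c, of w] that by (simp add: dist_norm) (smt (verit) zero_le_power2 divide_nonneg_nonneg)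
  have intS: "interior S = ball c \<rho> \<inter> ball 0 1" unfolding S_def by simp
  have clS: "closure S = S" unfolding S_def by (simp add: closed_Int)
  have Gz: "cmod (G z) \<le> max \<delta> (B * exp (-M))"
  proof (rule maximum_modulus_frontier[where S=S and f=G and \<xi>=z])
    show "G holomorphic_on interior S" unfolding intS G_def using hol by (intro holomorphic_intros)
    show "continuous_on (closure S) G" unfolding clS unfolding G_def S_def using cont by (intro continuous_intros)
    show "bounded S" unfolding S_def by (simp add: bounded_Int)
    have "\<rho>^2/4 \<le> \<rho>" using \<rho> \<rho>1 by (simp add: power2_eq_square mult_left_le)
    then show "z \<in> S" unfolding S_def using z by auto
  next
    fix w assume w: "w \<in> frontier S"
    then have wS: "w \<in> S" and wi: "w \<notin> interior S" using clS by (auto simp: frontier_def)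
    have w1: "w \<in> cball 0 1" using wS unfolding S_def by auto
    have ek: "exp (K * Re (w * cnj c - 1)) \<le> 1" using K Re0[OF w1] by (simp add: mult_nonneg_nonpos)
    show "cmod (G w) \<le> max \<delta> (B * exp (-M))"
    proof (cases "cmod w = 1")
      case True
      then have "w \<in> cball c \<rho> \<inter> sphere 0 1" using wS unfolding S_def by auto
      then have "cmod (g w) \<le> \<delta>" by (rule g\<delta>)
      then have "cmod (G w) \<le> \<delta>" unfolding nG using ek
        by (meson exp_ge_zero mult_le_one norm_ge_zero order_trans mult_right_le_one_le)
      then show ?thesis by simp
    next
      case False
      then have "dist c w = \<rho>" using wS wi unfolding S_def intS by auto
      then have "Re (w * cnj c - 1) \<le> - (\<rho>^2/2)" using lens_Re_bound[OF c, of w] w1 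
        by (simp add: dist_norm norm_minus_commute)
      then have "K * Re (w * cnj c - 1) \<le> K * (- (\<rho>^2/2))" using K by (intro mult_left_mono) auto
      also have "K * (- (\<rho>^2/2)) = -M" unfolding K_def using \<rho> by simp
      finally have e: "exp (K * Re (w * cnj c - 1)) \<le> exp (-M)" by simp
      have "cmod (g w) \<le> B" using wS unfolding S_def by (rule gB)
      moreover have "0 \<le> B" using calculation norm_ge_zero[of "g w"] by linarith
      ultimately have "cmod (G w) \<le> B * exp (-M)" unfolding nG using e
        by (intro mult_mono) auto
      then show ?thesis by simp
    qed
  qed
  have gz: "cmod (g z) = cmod (G z) * exp (- (K * Re (z * cnj c - 1)))"
  proof -
    have "exp (K * Re (z * cnj c - 1)) * exp (- (K * Re (z * cnj c - 1))) = 1"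
      by (simp flip: exp_add)
    then show ?thesis unfolding nG by (simp only: mult.assoc) 
  qed
  have tz: "- (K * Re (z * cnj c - 1)) \<le> M/2"
  proof -
    have r1: "- Re (z * cnj c - 1) \<le> cmod (z * cnj c - 1)" using abs_Re_le_cmod[of "z * cnj c - 1"] by linarith
    have eqa: "z * cnj c - 1 = (z - c) * cnj c"
      using c by (simp add: algebra_simps) (metis complex_norm_square mult.commute norm_one of_real_1 power_one)
    have "cmod ((z - c) * cnj c) = dist c z" using c by (simp add: norm_mult dist_norm norm_minus_commute)
    then have "- Re (z * cnj c - 1) \<le> dist c z" using r1 eqa by simp
    with z(2) have "- Re (z * cnj c - 1) \<le> \<rho>^2/4" by linarith
    then have "K * (- Re (z * cnj c - 1)) \<le> K * (\<rho>^2/4)" using K by (intro mult_left_mono)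
    also have "K * (\<rho>^2/4) = M/2" unfolding K_def using \<rho> by simp
    finally show ?thesis by (simp only: mult_minus_right)
  qed
  have "cmod (G z) * exp (- (K * Re (z * cnj c - 1))) \<le> max \<delta> (B * exp (-M)) * exp (M/2)"
  proof (rule mult_mono)
    show "0 \<le> max \<delta> (B * exp (-M))" using order_trans[OF norm_ge_zero Gz] .
  qed (use Gz tz in auto)
  then show ?thesis using gz by simp
qed


lemma exp_trick:
  fixes B \<epsilon> :: real
  assumes "B \<ge> 0" "\<epsilon> > 0"
  shows "\<exists>M\<ge>0. B * exp (-M) * exp (M/2) < \<epsilon>"
proof (intro exI[of _ "2 * (B / \<epsilon>)"] conjI)
  show "0 \<le> 2 * (B / \<epsilon>)" using assms by simp
  have e: "exp (-(2 * (B / \<epsilon>))) * exp (2 * (B / \<epsilon>) / 2) = 1 / exp (B / \<epsilon>)"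
    by (simp add: exp_minus field_simps flip: exp_add)
  have "B / \<epsilon> < exp (B / \<epsilon>)"
    using exp_ge_add_one_self[of "B/\<epsilon>"] by linarith
  then have "B < \<epsilon> * exp (B / \<epsilon>)" using assms by (simp add: field_simps)
  then have "B / exp (B / \<epsilon>) < \<epsilon>" by (simp add: field_simps)
  then show "B * exp (-(2 * (B / \<epsilon>))) * exp (2 * (B / \<epsilon>) / 2) < \<epsilon>"
    using e by (simp add: mult.assoc)
qed

lemma lens_zero:
  fixes g :: "complex \<Rightarrow> complex"
  assumes c: "cmod c = 1" and \<rho>: "\<rho> > 0" "\<rho> \<le> 1"
    and cont: "continuous_on (cball c \<rho> \<inter> cball 0 1) g"
    and hol: "g holomorphic_on (ball c \<rho> \<inter> ball 0 1)"
    and gB: "\<And>z. z \<in> cball c \<rho> \<inter> cball 0 1 \<Longrightarrow> cmod (g z) \<le> B"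
    and g0: "\<And>z. z \<in> cball c \<rho> \<inter> sphere 0 1 \<Longrightarrow> g z = 0"
    and z: "z \<in> cball 0 1" "dist c z \<le> \<rho>^2/4"
  shows "g z = 0"
proof (rule ccontr)
  assume "g z \<noteq> 0"
  then have pos: "cmod (g z) > 0" by simp
  have "cmod (g c) \<le> B" using gB[of c] c \<rho> by (auto simp: dist_norm)
  then have B0: "B \<ge> 0" using norm_ge_zero[of "g c"] by linarith
  obtain M where M: "M \<ge> 0" "B * exp (-M) * exp (M/2) < cmod (g z)"
    using exp_trick[OF B0 pos] by blast
  have g0': "\<And>w. w \<in> cball c \<rho> \<inter> sphere 0 1 \<Longrightarrow> cmod (g w) \<le> 0" using g0 by simp
  have "cmod (g z) \<le> max 0 (B * exp (-M)) * exp (M/2)"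
    by (rule lens_est[OF c \<rho> cont hol gB g0' M(1) z])
  also have "\<dots> = B * exp (-M) * exp (M/2)" using B0 by simp
  finally show False using M by simp
qed

lemma lens_limit:
  fixes h :: "nat \<Rightarrow> complex \<Rightarrow> complex" and U :: "complex \<Rightarrow> complex"
  assumes c: "cmod c = 1" and \<rho>: "\<rho> > 0" "\<rho> \<le> 1"
    and cont: "\<And>j. continuous_on (cball c \<rho> \<inter> cball 0 1) (h j)"
    and hol: "\<And>j. h j holomorphic_on (ball c \<rho> \<inter> ball 0 1)"
    and bnd: "\<And>j z. z \<in> cball c \<rho> \<inter> cball 0 1 \<Longrightarrow> cmod (h j z) \<le> B"
    and conv: "\<And>\<epsilon>. \<epsilon> > 0 \<Longrightarrow> \<exists>N. \<forall>j\<ge>N. \<forall>z\<in>cball c \<rho> \<inter> sphere 0 1. cmod (h j z - U z) < \<epsilon>"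
  shows "\<exists>H. continuous_on (cball c (\<rho>^2/4) \<inter> cball 0 1) H \<and>
             H holomorphic_on (ball c (\<rho>^2/4) \<inter> ball 0 1) \<and>
             (\<forall>z\<in>cball c (\<rho>^2/4) \<inter> sphere 0 1. H z = U z)"
proof -
  define K1 where "K1 = cball c (\<rho>^2/4) \<inter> cball 0 (1::real)"
  have r4: "\<rho>^2/4 \<le> \<rho>" using \<rho> by (simp add: power2_eq_square mult_left_le)
  have K1S: "K1 \<subseteq> cball c \<rho> \<inter> cball 0 1" unfolding K1_def using r4 by auto
  have "cmod (h 0 c) \<le> B" using bnd[of c 0] c \<rho> by (auto simp: dist_norm)
  then have B0: "B \<ge> 0" using norm_ge_zero[of "h 0 c"] by linarith
  have "uniformly_Cauchy_on K1 h"
    unfolding uniformly_Cauchy_on_def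
  proof (intro allI impI)
    fix \<epsilon> :: real assume \<epsilon>: "\<epsilon> > 0"
    have B2: "2 * B \<ge> 0" using B0 by simp
    have e2: "\<epsilon>/2 > 0" using \<epsilon> by simp
    obtain M where M: "M \<ge> 0" "2 * B * exp (-M) * exp (M/2) < \<epsilon>/2"
      using exp_trick[OF B2 e2] by blast
    define \<delta> where "\<delta> = \<epsilon> / 2 / exp (M/2)"
    have \<delta>: "\<delta> > 0" unfolding \<delta>_def using \<epsilon> by simp
    obtain N where N: "\<forall>j\<ge>N. \<forall>z\<in>cball c \<rho> \<inter> sphere 0 1. cmod (h j z - U z) < \<delta>/2"
      using conv[of "\<delta>/2"] \<delta> by auto
    show "\<exists>N. \<forall>x\<in>K1. \<forall>m\<ge>N. \<forall>n\<ge>N. dist (h m x) (h n x) < \<epsilon>"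
    proof (intro exI ballI allI impI)
      fix x m n assume x: "x \<in> K1" and m: "N \<le> m" and n: "N \<le> n"
      have "cmod (h m x - h n x) \<le> max \<delta> (2 * B * exp (-M)) * exp (M/2)"
      proof (rule lens_est[where g="\<lambda>z. h m z - h n z" and B="2*B" and \<delta>=\<delta> and z=x and M=M, OF c \<rho>(1) \<rho>(2) _ _ _ _ M(1)])
        show "continuous_on (cball c \<rho> \<inter> cball 0 1) (\<lambda>z. h m z - h n z)"
          using cont by (intro continuous_intros)
        show "(\<lambda>z. h m z - h n z) holomorphic_on ball c \<rho> \<inter> ball 0 1"
          using hol by (intro holomorphic_intros)
        fix z assume z: "z \<in> cball c \<rho> \<inter> cball 0 1"
        have "cmod (h m z - h n z) \<le> cmod (h m z) + cmod (h n z)" by (rule norm_triangle_ineq4)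
        also have "\<dots> \<le> 2 * B" using bnd[OF z, of m] bnd[OF z, of n] by simp
        finally show "cmod (h m z - h n z) \<le> 2 * B" .
      next
        fix z assume z: "z \<in> cball c \<rho> \<inter> sphere 0 1"
        have "h m z - h n z = (h m z - U z) - (h n z - U z)" by simp
        then have "cmod (h m z - h n z) \<le> cmod (h m z - U z) + cmod (h n z - U z)"
          by (metis norm_triangle_ineq4)
        also have "\<dots> < \<delta>/2 + \<delta>/2" using N m n z by (intro add_strict_mono) auto
        finally show "cmod (h m z - h n z) \<le> \<delta>" by simp
      next
        show "x \<in> cball 0 1" "dist c x \<le> \<rho>^2/4" using x unfolding K1_def by auto
      qed
      also have "\<dots> = max (\<delta> * exp (M/2)) (2 * B * exp (-M) * exp (M/2))"
        by (simp add: max_mult_distrib_right)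
      also have "\<delta> * exp (M/2) = \<epsilon>/2" unfolding \<delta>_def by simp
      also have "max (\<epsilon>/2) (2 * B * exp (-M) * exp (M/2)) < \<epsilon>" using M \<epsilon> by simp
      finally show "dist (h m x) (h n x) < \<epsilon>" by (simp add: dist_norm)
    qed
  qed
  then obtain H where H: "uniform_limit K1 h H sequentially"
    using Cauchy_uniformly_convergent unfolding uniformly_convergent_on_def by blast
  have contH: "continuous_on K1 H"
    by (rule uniform_limit_theorem[OF _ H]) (use continuous_on_subset[OF cont K1S] in auto)
  have holH: "H holomorphic_on (ball c (\<rho>^2/4) \<inter> ball 0 1)"
  proof -
    have op: "open (ball c (\<rho>^2/4) \<inter> ball (0::complex) 1)" by auto
    show ?thesis unfolding holomorphic_on_open[OF op]
    proof
      fix x assume x: "x \<in> ball c (\<rho>^2/4) \<inter> ball 0 1"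
      obtain r where r: "r > 0" "cball x r \<subseteq> ball c (\<rho>^2/4) \<inter> ball 0 1"
        using open_contains_cball op x by blast
      have sub: "cball x r \<subseteq> K1" using r unfolding K1_def by auto
      have sub2: "cball x r \<subseteq> cball c \<rho> \<inter> cball 0 1" using sub K1S by auto
      have "ball x r \<subseteq> ball c (\<rho>^2/4) \<inter> ball 0 1" using r(2) ball_subset_cball by blast
      moreover have "ball c (\<rho>^2/4) \<subseteq> ball c \<rho>" using r4 by (rule subset_ball)
      ultimately have sub3: "ball x r \<subseteq> ball c \<rho> \<inter> ball 0 1" by blast
      obtain "H holomorphic_on ball x r"
      proof (rule holomorphic_uniform_limit[where f=h and z=x and r=r and g=H and F=sequentially])
        show "\<forall>\<^sub>F n in sequentially. continuous_on (cball x r) (h n) \<and> h n holomorphic_on ball x r"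
          using continuous_on_subset[OF cont sub2] holomorphic_on_subset[OF hol sub3] by auto
        show "uniform_limit (cball x r) h H sequentially" by (rule uniform_limit_on_subset[OF H sub])
      qed auto
      then show "\<exists>f'. (H has_field_derivative f') (at x)"
        using holomorphic_on_open[of "ball x r" H] r by auto
    qed
  qed
  have valH: "H z = U z" if z: "z \<in> cball c (\<rho>^2/4) \<inter> sphere 0 1" for z
  proof -
    have zK: "z \<in> K1" using z unfolding K1_def by auto
    have zS: "z \<in> cball c \<rho> \<inter> sphere 0 1" using z r4 by auto
    have 1: "(\<lambda>n. h n z) \<longlonglongrightarrow> H z" by (rule tendsto_uniform_limitI[OF H zK])
    have 2: "(\<lambda>n. h n z) \<longlonglongrightarrow> U z"
    proof (rule LIMSEQ_I)
      fix r :: real assume "r > 0"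
      then obtain N where "\<forall>j\<ge>N. \<forall>z\<in>cball c \<rho> \<inter> sphere 0 1. cmod (h j z - U z) < r" using conv by blast
      then show "\<exists>no. \<forall>n\<ge>no. norm (h n z - U z) < r" using zS by blast
    qed
    show ?thesis using LIMSEQ_unique[OF 1 2] .
  qed
  show ?thesis using contH holH valH unfolding K1_def by blast
qed


datatype ex = Cst real | VC | VS | VI | Add ex ex | Mul ex ex

fun ev :: "ex \<Rightarrow> real \<Rightarrow> real \<Rightarrow> real \<Rightarrow> real" where
  "ev (Cst a) c s i = a"
| "ev VC c s i = c"
| "ev VS c s i = s"
| "ev VI c s i = i"
| "ev (Add a b) c s i = ev a c s i + ev b c s i"
| "ev (Mul a b) c s i = ev a c s i * ev b c s i"

fun dx :: "ex \<Rightarrow> ex" where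
  "dx (Cst a) = Cst 0"
| "dx VC = Mul (Cst (-1)) VS"
| "dx VS = VC"
| "dx VI = Mul (Cst (-1)) (Mul VC (Mul VI VI))"
| "dx (Add a b) = Add (dx a) (dx b)"
| "dx (Mul a b) = Add (Mul (dx a) b) (Mul a (dx b))"

definition Tx :: "ex \<Rightarrow> ex" where
  "Tx e = Add (dx e) (Mul e (Mul VC (Mul VI VI)))"

definition sf :: "real \<Rightarrow> real \<Rightarrow> real \<Rightarrow> real" where
  "sf x y t = x * sin t - y * cos t"
definition cf :: "real \<Rightarrow> real \<Rightarrow> real \<Rightarrow> real" where
  "cf x y t = x * cos t + y * sin t"

lemma sf_deriv: "(sf x y has_real_derivative cf x y t) (at t)"
  unfolding sf_def cf_def by (auto intro!: derivative_eq_intros)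
lemma cf_deriv: "(cf x y has_real_derivative - sf x y t) (at t)"
  unfolding sf_def cf_def by (auto intro!: derivative_eq_intros)

lemma sf_cf_sq: "(sf x y t)^2 + (cf x y t)^2 = x^2 + y^2"
proof -
  have "(sf x y t)^2 + (cf x y t)^2 = (x^2 + y^2) * ((sin t)^2 + (cos t)^2)"
    unfolding sf_def cf_def by algebra
  then show ?thesis by (simp only: sin_cos_squared_add mult_1_right)
qed

lemma sf_cf_le1:
  assumes "x^2 + y^2 = 1"
  shows "\<bar>sf x y t\<bar> \<le> 1" "\<bar>cf x y t\<bar> \<le> 1"
proof -
  have "(sf x y t)^2 \<le> 1" "(cf x y t)^2 \<le> 1" using sf_cf_sq[of x y t] assms
    by (smt (verit) zero_le_power2)+
  then show "\<bar>sf x y t\<bar> \<le> 1" "\<bar>cf x y t\<bar> \<le> 1" by (simp_all add: abs_le_square_iff[of _ 1, simplified] power2_le_iff_abs_le)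
qed

lemma sf_add: "sf x y (t + h) = sf x y t * cos h + cf x y t * sin h"
  unfolding sf_def cf_def by (simp add: sin_add cos_add algebra_simps)

definition Ev :: "real \<Rightarrow> real \<Rightarrow> ex \<Rightarrow> real \<Rightarrow> real" where
  "Ev x y e t = ev e (cf x y t) (sf x y t) (1 / sf x y t)"

lemma Ev_deriv:
  assumes "sf x y t \<noteq> 0"
  shows "(Ev x y e has_real_derivative Ev x y (dx e) t) (at t)"
proof (induction e)
  case (Cst a) then show ?case by (simp add: Ev_def)
next
  case VC then show ?case using cf_deriv[of x y t] by (simp add: Ev_def)
next
  case VS then show ?case using sf_deriv[of x y t] by (simp add: Ev_def)
next
  case VI
  have "((\<lambda>t. 1 / sf x y t) has_real_derivative - (cf x y t / (sf x y t)^2)) (at t)"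
    using sf_deriv[of x y t] assms
    by (auto intro!: derivative_eq_intros simp: power2_eq_square field_simps)
  then show ?case by (simp add: Ev_def power2_eq_square field_simps)
next
  case (Add a b)
  then show ?case unfolding Ev_def by (auto intro!: derivative_eq_intros)
next
  case (Mul a b)
  then show ?case unfolding Ev_def by (auto intro!: derivative_eq_intros simp: algebra_simps)
qed

lemma ev_bound:
  "\<exists>A N. A \<ge> 0 \<and> (\<forall>cv t. \<bar>cv\<bar> \<le> 1 \<longrightarrow> 0 < t \<longrightarrow> t \<le> 1 \<longrightarrow>
       \<bar>ev e cv t (1/t)\<bar> \<le> A * (1/t)^N)"
proof (induction e)
  case (Cst a) then show ?case by (intro exI[of _ "\<bar>a\<bar>"] exI[of _ 0]) auto
next
  case VC then show ?case by (intro exI[of _ 1] exI[of _ 0]) auto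
next
  case VS then show ?case by (intro exI[of _ 1] exI[of _ 0]) auto
next
  case VI then show ?case by (intro exI[of _ 1] exI[of _ 1]) auto
next
  case (Add a b)
  then obtain A1 N1 A2 N2 where 1: "A1 \<ge> 0" "\<forall>cv t. \<bar>cv\<bar> \<le> 1 \<longrightarrow> 0 < t \<longrightarrow> t \<le> 1 \<longrightarrow> \<bar>ev a cv t (1/t)\<bar> \<le> A1 * (1/t)^N1"
    and 2: "A2 \<ge> 0" "\<forall>cv t. \<bar>cv\<bar> \<le> 1 \<longrightarrow> 0 < t \<longrightarrow> t \<le> 1 \<longrightarrow> \<bar>ev b cv t (1/t)\<bar> \<le> A2 * (1/t)^N2"
    by blast
  show ?case
  proof (intro exI[of _ "A1 + A2"] exI[of _ "N1 + N2"] conjI allI impI)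
    show "0 \<le> A1 + A2" using 1 2 by simp
    fix cv t :: real assume h: "\<bar>cv\<bar> \<le> 1" "0 < t" "t \<le> 1"
    have w1: "1 \<le> 1/t" using h by simp
    have p1: "(1/t)^N1 \<le> (1/t)^(N1+N2)" "(1/t)^N2 \<le> (1/t)^(N1+N2)"
      using w1 by (intro power_increasing; simp)+
    have "\<bar>ev (Add a b) cv t (1/t)\<bar> \<le> \<bar>ev a cv t (1/t)\<bar> + \<bar>ev b cv t (1/t)\<bar>" by simp
    also have "\<dots> \<le> A1 * (1/t)^N1 + A2 * (1/t)^N2" using 1 2 h by (intro add_mono) auto
    also have "\<dots> \<le> A1 * (1/t)^(N1+N2) + A2 * (1/t)^(N1+N2)"
      using p1 1 2 by (intro add_mono mult_left_mono) auto
    finally show "\<bar>ev (Add a b) cv t (1/t)\<bar> \<le> (A1 + A2) * (1/t)^(N1+N2)" by (simp add: algebra_simps)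
  qed
next
  case (Mul a b)
  then obtain A1 N1 A2 N2 where 1: "A1 \<ge> 0" "\<forall>cv t. \<bar>cv\<bar> \<le> 1 \<longrightarrow> 0 < t \<longrightarrow> t \<le> 1 \<longrightarrow> \<bar>ev a cv t (1/t)\<bar> \<le> A1 * (1/t)^N1"
    and 2: "A2 \<ge> 0" "\<forall>cv t. \<bar>cv\<bar> \<le> 1 \<longrightarrow> 0 < t \<longrightarrow> t \<le> 1 \<longrightarrow> \<bar>ev b cv t (1/t)\<bar> \<le> A2 * (1/t)^N2"
    by blast
  show ?case
  proof (intro exI[of _ "A1 * A2"] exI[of _ "N1 + N2"] conjI allI impI)
    show "0 \<le> A1 * A2" using 1 2 by simp
    fix cv t :: real assume h: "\<bar>cv\<bar> \<le> 1" "0 < t" "t \<le> 1"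
    have "\<bar>ev (Mul a b) cv t (1/t)\<bar> = \<bar>ev a cv t (1/t)\<bar> * \<bar>ev b cv t (1/t)\<bar>" by (simp add: abs_mult)
    also have "\<dots> \<le> (A1 * (1/t)^N1) * (A2 * (1/t)^N2)" using 1 2 h by (intro mult_mono) auto
    also have "\<dots> = (A1 * A2) * (1/t)^(N1+N2)" by (simp add: power_add algebra_simps)
    finally show "\<bar>ev (Mul a b) cv t (1/t)\<bar> \<le> (A1 * A2) * (1/t)^(N1+N2)" .
  qed
qed

definition Gf :: "real \<Rightarrow> real \<Rightarrow> ex \<Rightarrow> real \<Rightarrow> real" where
  "Gf x y e t = (if sf x y t > 0 then Ev x y e t * exp (- (1 / sf x y t)) else 0)"

lemma sf_cont: "continuous_on UNIV (sf x y)"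
  unfolding sf_def by (intro continuous_intros)

lemma Gf_flat:
  assumes xy: "x^2 + y^2 = 1" and t0: "sf x y t = 0"
  shows "(Gf x y e has_real_derivative 0) (at t)"
proof -
  obtain A N where A: "A \<ge> 0" and AN: "\<And>cv \<tau>. \<bar>cv\<bar> \<le> 1 \<Longrightarrow> 0 < \<tau> \<Longrightarrow> \<tau> \<le> 1 \<Longrightarrow>
       \<bar>ev e cv \<tau> (1/\<tau>)\<bar> \<le> A * (1/\<tau>)^N"
    using ev_bound[of e] by blast
  have G0: "Gf x y e t = 0" unfolding Gf_def using t0 by simp
  show ?thesis unfolding DERIV_def G0
  proof (rule LIM_I)
    fix r :: real assume r: "r > 0"
    have T: "((\<lambda>w. w ^ (N+1) / exp w) \<longlongrightarrow> (0::real)) at_top" by (rule tendsto_power_div_exp_0)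
    have P: "r / (A + 1) > 0" using r A by simp
    have "eventually (\<lambda>w::real. dist (w ^ (N+1) / exp w) 0 < r / (A + 1)) at_top"
      using tendstoD[OF T P] .
    then obtain W where W: "\<And>w. w \<ge> W \<Longrightarrow> \<bar>w ^ (N+1) / exp w\<bar> < r / (A + 1)"
      unfolding eventually_at_top_linorder by auto
    define W' where "W' = max W 1"
    have W'pos: "W' > 0" unfolding W'_def by simp
    show "\<exists>s>0. \<forall>h. h \<noteq> 0 \<and> norm (h - 0) < s \<longrightarrow> norm ((Gf x y e (t + h) - 0) / h - 0) < r"
    proof (intro exI[of _ "1 / W'"] conjI allI impI)
      show "0 < 1 / W'" using W'pos by simp
      fix h :: real assume h: "h \<noteq> 0 \<and> norm (h - 0) < 1 / W'"
      show "norm ((Gf x y e (t + h) - 0) / h - 0) < r"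
      proof (cases "sf x y (t + h) > 0")
        case False
        then show ?thesis unfolding Gf_def using r by simp
      next
        case True
        define \<tau> where "\<tau> = sf x y (t + h)"
        have \<tau>pos: "\<tau> > 0" using True unfolding \<tau>_def by simp
        have "\<tau> = cf x y t * sin h" unfolding \<tau>_def sf_add t0 by simp
        then have "\<tau> \<le> \<bar>cf x y t\<bar> * \<bar>sin h\<bar>" by (simp add: abs_mult[symmetric])
        also have "\<dots> \<le> 1 * \<bar>h\<bar>" using sf_cf_le1(2)[OF xy, of t] abs_sin_x_le_abs_x[of h]
          by (intro mult_mono) auto
        finally have \<tau>h: "\<tau> \<le> \<bar>h\<bar>" by simp
        have \<tau>1: "\<tau> \<le> 1" using sf_cf_le1(1)[OF xy, of "t+h"] unfolding \<tau>_def by simp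
        define w where "w = 1 / \<tau>"
        have wpos: "w > 0" unfolding w_def using \<tau>pos by simp
        have "\<bar>h\<bar> < 1 / W'" using h by simp
        then have "\<tau> < 1 / W'" using \<tau>h by simp
        then have "W' < w" unfolding w_def using \<tau>pos W'pos by (simp add: field_simps)
        then have wW: "w \<ge> W" unfolding W'_def by simp
        have hw: "1 / \<bar>h\<bar> \<le> w" unfolding w_def using \<tau>h \<tau>pos by (simp add: frac_le)
        have Ev: "\<bar>Ev x y e (t+h)\<bar> \<le> A * w^N"
          unfolding Ev_def w_def \<tau>_def[symmetric] using AN[OF sf_cf_le1(2)[OF xy] \<tau>pos \<tau>1] by simp
        have Gv: "Gf x y e (t+h) = Ev x y e (t+h) * exp (- w)"
          unfolding Gf_def w_def \<tau>_def using True by simp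
        have "norm ((Gf x y e (t + h) - 0) / h - 0) = \<bar>Ev x y e (t+h)\<bar> * exp (- w) * (1 / \<bar>h\<bar>)"
          unfolding Gv by (simp add: abs_mult divide_inverse)
        also have "\<dots> \<le> (A * w^N) * exp (- w) * w"
          using Ev hw by (intro mult_mono) auto
        also have "\<dots> = A * (w ^ (N+1) / exp w)" by (simp add: exp_minus field_simps)
        also have "\<dots> \<le> A * (r / (A + 1))" using W[OF wW] A abs_ge_self[of "w ^ (N+1) / exp w"] by (intro mult_left_mono) auto
        also have "\<dots> < r" using A r by (simp add: field_simps)
        finally show ?thesis .
      qed
    qed
  qed
qed


lemma Gf_deriv:
  assumes xy: "x^2 + y^2 = 1"
  shows "(Gf x y e has_real_derivative Gf x y (Tx e) t) (at t)"
proof (cases "sf x y t" "0::real" rule: linorder_cases)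
  case equal
  have "Gf x y (Tx e) t = 0" unfolding Gf_def using equal by simp
  then show ?thesis using Gf_flat[OF xy equal, of e] by simp
next
  case less
  have "((\<lambda>u. 0) has_real_derivative 0) (at t)" by simp
  then have "(Gf x y e has_real_derivative 0) (at t)"
  proof (rule has_field_derivative_transform_within_open)
    show "open {u. sf x y u < 0}"
      by (rule open_Collect_less[OF sf_cont continuous_on_const])
    show "t \<in> {u. sf x y u < 0}" using less by simp
    fix u assume "u \<in> {u. sf x y u < 0}"
    then show "0 = Gf x y e u" unfolding Gf_def by simp
  qed
  moreover have "Gf x y (Tx e) t = 0" unfolding Gf_def using less by simp
  ultimately show ?thesis by simp
next
  case greater
  have d1: "((\<lambda>u. - (1 / sf x y u)) has_real_derivative cf x y t / (sf x y t)^2) (at t)"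
    using sf_deriv[of x y t] greater
    by (auto intro!: derivative_eq_intros simp: power2_eq_square field_simps)
  have d: "((\<lambda>u. Ev x y e u * exp (- (1 / sf x y u))) has_real_derivative
      Ev x y (dx e) t * exp (- (1 / sf x y t)) + exp (- (1 / sf x y t)) * (cf x y t / (sf x y t)^2) * Ev x y e t) (at t)"
    by (rule DERIV_mult[OF Ev_deriv DERIV_fun_exp[OF d1]]) (use greater in simp)
  have "(Gf x y e has_real_derivative
      Ev x y (dx e) t * exp (- (1 / sf x y t)) + exp (- (1 / sf x y t)) * (cf x y t / (sf x y t)^2) * Ev x y e t) (at t)"
  proof (rule has_field_derivative_transform_within_open[OF d])
    show "open {u. 0 < sf x y u}"
      by (rule open_Collect_less[OF continuous_on_const sf_cont])
    show "t \<in> {u. 0 < sf x y u}" using greater by simp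
    fix u assume "u \<in> {u. 0 < sf x y u}"
    then show "Ev x y e u * exp (- (1 / sf x y u)) = Gf x y e u" unfolding Gf_def by simp
  qed
  moreover have "Gf x y (Tx e) t = Ev x y (dx e) t * exp (- (1 / sf x y t)) + exp (- (1 / sf x y t)) * (cf x y t / (sf x y t)^2) * Ev x y e t"
    unfolding Gf_def Tx_def Ev_def using greater by (simp add: power2_eq_square field_simps)
  ultimately show ?thesis by simp
qed


definition GC :: "real \<Rightarrow> real \<Rightarrow> ex \<Rightarrow> real \<Rightarrow> complex" where
  "GC x y e = (\<lambda>t. complex_of_real (Gf x y e t))"

lemma GC_vd:
  assumes xy: "x^2 + y^2 = 1"
  shows "(GC x y e has_vector_derivative GC x y (Tx e) t) (at t)"
  unfolding GC_def by (rule has_vector_derivative_of_real[OF Gf_deriv[OF xy]])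

lemma iter_GC:
  assumes xy: "x^2 + y^2 = 1"
  shows "iter_deriv l (GC x y e) = GC x y ((Tx ^^ l) e)"
proof (induction l)
  case 0 then show ?case by simp
next
  case (Suc l)
  show ?case
  proof (rule ext)
    fix t
    show "iter_deriv (Suc l) (GC x y e) t = GC x y ((Tx ^^ Suc l) e) t"
      using vector_derivative_at[OF GC_vd[OF xy, of "(Tx ^^ l) e" t]] Suc by simp
  qed
qed

lemma GC_Ck:
  assumes xy: "x^2 + y^2 = 1"
  shows "Ck_real k (GC x y e)"
  unfolding Ck_real_def iter_GC[OF xy]
proof (intro conjI allI impI)
  fix l t
  show "GC x y ((Tx ^^ l) e) differentiable at t"
    using GC_vd[OF xy] by (auto simp: differentiable_def has_vector_derivative_def)
next
  fix l
  have "isCont (GC x y ((Tx ^^ l) e)) t" for t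
    using GC_vd[OF xy] by (meson has_vector_derivative_continuous)
  then show "continuous_on UNIV (GC x y ((Tx ^^ l) e))"
    by (simp add: continuous_at_imp_continuous_on)
qed

definition psi :: "real \<Rightarrow> real" where
  "psi w = (if w > 0 then exp (- (1 / w)) else 0)"

definition fz0 :: "complex \<Rightarrow> complex \<Rightarrow> complex" where
  "fz0 z0 z = (if z \<in> sphere 0 1 then complex_of_real (psi (Im (z * cnj z0))) else 0)"

lemma circ_param_fz0:
  "circ_param (fz0 z0) = GC (Re z0) (Im z0) (Cst 1)"
proof (rule ext)
  fix t
  have "Im (cis t * cnj z0) = sf (Re z0) (Im z0) t"
    by (simp add: sf_def cis.sel algebra_simps)
  then show "circ_param (fz0 z0) t = GC (Re z0) (Im z0) (Cst 1) t"
    unfolding circ_param_def fz0_def GC_def Gf_def psi_def Ev_def by simp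
qed

lemma z0_sq: "cmod z0 = 1 \<Longrightarrow> (Re z0)^2 + (Im z0)^2 = 1"
  by (metis cmod_power2 one_power2)

lemma fz0_Ck:
  assumes "cmod z0 = 1"
  shows "fz0 z0 \<in> Ck_T k"
proof -
  have "Ck_real k (circ_param (fz0 z0))" unfolding circ_param_fz0 by (rule GC_Ck[OF z0_sq[OF assms]])
  then show ?thesis by (auto simp: Ck_T_def fz0_def)
qed


lemma cnj_unit: "cmod z0 = 1 \<Longrightarrow> z0 * cnj z0 = 1"
  by (metis complex_norm_square mult.commute norm_one of_real_1 power_one)

lemma fz0_U3:
  assumes z0: "cmod z0 = 1"
  shows "fz0 z0 \<in> U3 z0 k"
  unfolding U3_def
proof (intro CollectI conjI notI)
  show "fz0 z0 \<in> Ck_T k" by (rule fz0_Ck[OF z0])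
  assume "\<exists>r>0. \<exists>h. continuous_on (sphere 0 1 \<union> P_set z0 r) h \<and> h holomorphic_on P_set z0 r \<and>
            (\<forall>z\<in>ball z0 r \<inter> sphere 0 1. h z = fz0 z0 z)"
  then obtain r h where r: "r > 0" and hc: "continuous_on (sphere 0 1 \<union> P_set z0 r) h"
    and hh: "h holomorphic_on P_set z0 r" and hv: "\<And>z. z \<in> ball z0 r \<inter> sphere 0 1 \<Longrightarrow> h z = fz0 z0 z"
    by blast
  have cc: "z0 * cnj z0 = 1" by (rule cnj_unit[OF z0])
  have "continuous_on UNIV (\<lambda>t. cis t)" by (intro continuous_intros)
  then have "isCont cis 0" by (simp add: continuous_on_eq_continuous_at)
  then have "cis \<midarrow>0\<rightarrow> cis 0" by (simp add: isCont_def)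
  from LIM_D[OF this, of "r/2"] r obtain s where s: "s > 0"
    and sc: "\<And>t. t \<noteq> 0 \<and> norm (t - 0) < s \<Longrightarrow> cmod (cis t - cis 0) < r/2" by auto
  define a where "a = min (s/2) 1"
  have a: "a > 0" "a < s" "a \<le> 1" unfolding a_def using s by auto
  have sa: "sin a > 0" using a by (intro sin_gt_zero) (use pi_gt3 in auto)
  have ca1: "cmod (cis a - 1) < r/2" using sc[of a] a by simp
  have ca2: "cmod (cis (-a) - 1) < r/2" using sc[of "-a"] a by simp
  define z1 where "z1 = z0 * cis (-a)"
  define z2 where "z2 = z0 * cis a"
  have z1n: "cmod z1 = 1" and z2n: "cmod z2 = 1" unfolding z1_def z2_def using z0 by (simp_all add: norm_mult)
  have dz1: "dist z0 z1 < r/2" unfolding z1_def dist_norm using ca2 z0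
    by (metis mult.right_neutral norm_minus_commute norm_mult right_diff_distrib mult_1)
  have dz2: "dist z0 z2 < r/2" unfolding z2_def dist_norm using ca1 z0
    by (metis mult.right_neutral norm_minus_commute norm_mult right_diff_distrib mult_1)
  have Im1: "Im (z1 * cnj z0) = - sin a"
  proof -
    have "z1 * cnj z0 = cis (-a) * (z0 * cnj z0)" unfolding z1_def by (simp add: algebra_simps)
    then show ?thesis using cc by simp
  qed
  have Im2: "Im (z2 * cnj z0) = sin a"
  proof -
    have "z2 * cnj z0 = cis a * (z0 * cnj z0)" unfolding z2_def by (simp add: algebra_simps)
    then show ?thesis using cc by simp
  qed
  define \<rho> where "\<rho> = min (min (r/2) 1) (sin a / 2)"
  have \<rho>: "\<rho> > 0" "\<rho> \<le> 1" "\<rho> \<le> r/2" "\<rho> \<le> sin a / 2" unfolding \<rho>_def using r sa by auto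
  have ballsub: "cball z1 \<rho> \<subseteq> ball z0 r"
  proof
    fix w assume "w \<in> cball z1 \<rho>"
    then have "dist z1 w \<le> \<rho>" by simp
    then show "w \<in> ball z0 r" using dz1 \<rho> dist_triangle[of z0 w z1] by simp
  qed
  define L where "L = cball z1 \<rho> \<inter> cball 0 (1::real)"
  have LS: "L \<subseteq> sphere 0 1 \<union> P_set z0 r"
  proof
    fix w assume w: "w \<in> L"
    show "w \<in> sphere 0 1 \<union> P_set z0 r"
    proof (cases "cmod w = 1")
      case True then show ?thesis by simp
    next
      case False
      then have "cmod w < 1" using w unfolding L_def by auto
      moreover have "w \<in> ball z0 r" using w ballsub unfolding L_def by auto
      ultimately show ?thesis unfolding P_set_def by auto
    qed
  qed
  have Lc: "continuous_on L h" using continuous_on_subset[OF hc LS] .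
  have Lcomp: "compact L" unfolding L_def by (intro compact_Int_closed) auto
  obtain B where B: "\<And>w. w \<in> L \<Longrightarrow> cmod (h w) \<le> B"
    using continuous_on_compact_bound[OF Lcomp Lc] by blast
  have hol1: "h holomorphic_on (ball z1 \<rho> \<inter> ball 0 1)"
    by (rule holomorphic_on_subset[OF hh]) (use ballsub in \<open>auto simp: P_set_def\<close>)
  have zero1: "h w = 0" if w: "w \<in> cball z1 \<rho> \<inter> sphere 0 1" for w
  proof -
    have "Im (w * cnj z0) = Im (z1 * cnj z0) + Im ((w - z1) * cnj z0)" by (simp add: algebra_simps)
    also have "Im ((w - z1) * cnj z0) \<le> cmod ((w - z1) * cnj z0)" using abs_Im_le_cmod[of "(w - z1) * cnj z0"] by linarith
    also have "cmod ((w - z1) * cnj z0) = dist z1 w" using z0 by (simp add: norm_mult dist_norm norm_minus_commute)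
    also have "dist z1 w \<le> \<rho>" using w by simp
    finally have "Im (w * cnj z0) < 0" using Im1 \<rho> sa by simp
    then have "fz0 z0 w = 0" unfolding fz0_def psi_def by simp
    moreover have "w \<in> ball z0 r \<inter> sphere 0 1" using w ballsub by auto
    ultimately show "h w = 0" using hv by simp
  qed
  have zeroV: "h w = 0" if w: "w \<in> ball z1 (\<rho>^2/4) \<inter> ball 0 1" for w
    by (rule lens_zero[OF z1n \<rho>(1) \<rho>(2) Lc[unfolded L_def] hol1 B[unfolded L_def] zero1]) (use w in auto)
  have r4: "\<rho>^2/4 \<le> \<rho>" using \<rho> by (simp add: power2_eq_square mult_left_le)
  have Popen: "open (P_set z0 r)" unfolding P_set_def by auto
  have Pconn: "connected (P_set z0 r)" unfolding P_set_def by (intro convex_connected convex_Int) auto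
  have VP: "ball z1 (\<rho>^2/4) \<inter> ball 0 1 \<subseteq> P_set z0 r"
    using ballsub r4 unfolding P_set_def by auto
  have Vne: "ball z1 (\<rho>^2/4) \<inter> ball 0 1 \<noteq> {}"
  proof -
    define e where "e = \<rho>^2/8"
    define q where "q = z1 * of_real (1 - e)"
    have q1: "e > 0" "e < 1" unfolding e_def using \<rho> by (auto simp: power2_eq_square) (smt (verit) mult_le_one)
    have "z1 - q = z1 * of_real e" unfolding q_def by (simp add: algebra_simps)
    then have "dist z1 q = e" unfolding dist_norm using z1n q1 by (simp add: norm_mult)
    moreover have "cmod q = 1 - e" unfolding q_def using z1n q1 by (simp add: norm_mult del: of_real_diff)
    moreover have "e < \<rho>^2/4" unfolding e_def using \<rho> by simp
    ultimately have "q \<in> ball z1 (\<rho>^2/4) \<inter> ball 0 1" using q1 by simp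
    then show ?thesis by blast
  qed
  have hP: "h w = 0" if "w \<in> P_set z0 r" for w
    using analytic_continuation_open[where s="ball z1 (\<rho>^2/4) \<inter> ball 0 1" and s'="P_set z0 r" and f=h and g="\<lambda>_. 0"]
      Popen Vne Pconn VP hh zeroV that by auto
  define s' where "s' = min (1/2) ((r - dist z0 z2)/2)"
  have d0: "0 \<le> dist z0 z2" by simp
  have dr: "dist z0 z2 < r" using dz2 d0 by linarith
  have s': "s' > 0" "s' \<le> 1/2" "s' < r - dist z0 z2" unfolding s'_def using dz2 dr
    by (auto simp: min_def)
  define x where "x n = z2 * of_real (1 - s' / real (Suc n))" for n
  have xn: "cmod (x n) = 1 - s' / real (Suc n)" for n
  proof -
    have "s' / real (Suc n) \<le> s'" using s' by (simp add: divide_le_eq)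
    then show ?thesis unfolding x_def using z2n s' by (simp add: norm_mult del: of_real_diff)
  qed
  have xP: "x n \<in> P_set z0 r" for n
  proof -
    have pos: "s' / real (Suc n) > 0" using s' by simp
    have le: "s' / real (Suc n) \<le> s'" using s' by (simp add: divide_le_eq)
    have "z2 - x n = z2 * of_real (s' / real (Suc n))" unfolding x_def by (simp add: algebra_simps del: of_real_divide)
    then have "dist z2 (x n) = s' / real (Suc n)" unfolding dist_norm using z2n pos
      by (simp only: norm_mult norm_of_real)
    then have "dist z0 (x n) < r" using dist_triangle[of z0 "x n" z2] s' le by simp
    moreover have "cmod (x n) < 1" using xn pos by simp
    ultimately show ?thesis unfolding P_set_def by simp
  qed
  have xlim: "x \<longlonglongrightarrow> z2"
  proof -
    have "(\<lambda>n. s' / real (Suc n)) \<longlonglongrightarrow> 0"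
      using LIMSEQ_Suc[OF lim_const_over_n[of s']] by simp
    then have "(\<lambda>n. z2 * of_real (1 - s' / real (Suc n))) \<longlonglongrightarrow> z2 * of_real (1 - 0)"
      by (intro tendsto_intros)
    then show ?thesis unfolding x_def by simp
  qed
  have "((h \<circ> x) \<longlongrightarrow> h z2) sequentially"
    using hc[unfolded continuous_on_sequentially] xP xlim z2n by auto
  moreover have "h \<circ> x = (\<lambda>n. 0)" using hP xP by (auto simp: o_def)
  ultimately have "h z2 = 0" using LIMSEQ_unique tendsto_const by (metis)
  moreover have "h z2 = fz0 z0 z2" using hv z2n dz2 r by auto
  moreover have "fz0 z0 z2 \<noteq> 0" unfolding fz0_def psi_def using Im2 sa z2n by simp
  ultimately show False by simp
qed


lemma sphere_cis:
  assumes "z \<in> sphere 0 1" shows "cis (Arg z) = z"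
proof -
  have n: "cmod z = 1" using assms by simp
  then have "z \<noteq> 0" by auto
  then have "cis (Arg z) = sgn z" by (rule cis_Arg)
  also have "sgn z = z" using n by (simp add: sgn_div_norm)
  finally show ?thesis .
qed

lemma u_cont_sphere:
  assumes "u \<in> Ck_T k"
  shows "continuous_on (sphere 0 1) u"
proof -
  have g: "continuous_on UNIV (circ_param u)"
    using assms by (auto simp: Ck_T_def Ck_real_def zero_enat_def[symmetric] dest: spec[of _ 0])
  define A where "A = sphere (0::complex) 1 \<inter> - \<real>\<^sub>\<le>\<^sub>0"
  define B where "B = sphere (0::complex) 1 \<inter> - uminus ` \<real>\<^sub>\<le>\<^sub>0"
  have cA: "continuous_on A u"
  proof (rule continuous_on_eq)
    show "continuous_on A (circ_param u \<circ> Arg)"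
    proof (intro continuous_at_imp_continuous_on ballI)
      fix z assume "z \<in> A"
      then have "isCont Arg z" unfolding A_def by (intro continuous_at_Arg) auto
      then show "isCont (circ_param u \<circ> Arg) z"
        using g by (intro continuous_at_compose) (auto simp: continuous_on_eq_continuous_at)
    qed
    fix z assume "z \<in> A"
    then show "(circ_param u \<circ> Arg) z = u z" unfolding A_def circ_param_def by (simp add: sphere_cis)
  qed
  have cB: "continuous_on B u"
  proof (rule continuous_on_eq)
    show "continuous_on B (\<lambda>z. circ_param u (Arg (- z) + pi))"
    proof (intro continuous_at_imp_continuous_on ballI)
      fix z assume "z \<in> B"
      then have zB: "z \<notin> uminus ` \<real>\<^sub>\<le>\<^sub>0" unfolding B_def by auto
      have "- z \<notin> \<real>\<^sub>\<le>\<^sub>0"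
      proof
        assume "- z \<in> \<real>\<^sub>\<le>\<^sub>0"
        then have "z \<in> uminus ` \<real>\<^sub>\<le>\<^sub>0" by (rule image_eqI[where x="-z", rotated]) simp
        with zB show False by blast
      qed
      then have "isCont Arg (-z)" by (intro continuous_at_Arg)
      then have "isCont (\<lambda>z. Arg (- z)) z" by (intro continuous_at_compose[of z uminus Arg, unfolded o_def]) (auto intro: continuous_intros)
      then show "isCont (\<lambda>z. circ_param u (Arg (- z) + pi)) z"
        using g by (intro continuous_at_compose[of z _ "circ_param u", unfolded o_def] continuous_intros) (auto simp: continuous_on_eq_continuous_at)
    qed
    fix z assume z: "z \<in> B"
    have "cis (Arg (- z) + pi) = cis (Arg (-z)) * cis pi" by (simp only: cis_mult)
    also have "cis (Arg (-z)) = - z" using z unfolding B_def by (intro sphere_cis) simp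
    finally have "cis (Arg (- z) + pi) = z" by simp
    then show "circ_param u (Arg (- z) + pi) = u z" unfolding circ_param_def by simp
  qed
  have AB: "A \<union> B = sphere 0 1"
  proof
    show "A \<union> B \<subseteq> sphere 0 1" unfolding A_def B_def by auto
    show "sphere 0 1 \<subseteq> A \<union> B"
    proof
      fix z :: complex assume z: "z \<in> sphere 0 1"
      show "z \<in> A \<union> B"
      proof (rule ccontr)
        assume "z \<notin> A \<union> B"
        then have "z \<in> \<real>\<^sub>\<le>\<^sub>0" "z \<in> uminus ` \<real>\<^sub>\<le>\<^sub>0" using z unfolding A_def B_def by auto
        then have "Re z \<le> 0" "Re z \<ge> 0" "Im z = 0"
          by (auto simp: complex_nonpos_Reals_iff)
        then have "z = 0" by (simp add: complex_eq_iff)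
        then show False using z by simp
      qed
    qed
  qed
  have oA: "openin (top_of_set (A \<union> B)) A"
    unfolding AB unfolding A_def by (intro openin_open_Int) (auto simp: open_Compl)
  have oB: "openin (top_of_set (A \<union> B)) B"
  proof -
    have "closed (uminus ` (\<real>\<^sub>\<le>\<^sub>0 :: complex set))"
      by (intro closed_injective_linear_image) (auto intro: linear_uminus)
    then show ?thesis unfolding AB unfolding B_def by (intro openin_open_Int) (auto simp: open_Compl)
  qed
  show ?thesis using continuous_on_Un_local_open[OF oA oB cA cB] AB by simp
qed


lemma iter_deriv_zero: "iter_deriv l (\<lambda>x. 0::complex) = (\<lambda>x. 0)"
  by (induction l) auto

lemma Ck_zero: "Ck_real k (\<lambda>x. 0::complex)"
  unfolding Ck_real_def iter_deriv_zero by auto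

lemma iter_deriv_scale:
  assumes "Ck_real k g" "enat l \<le> k"
  shows "iter_deriv l (\<lambda>x. c * g x) = (\<lambda>x. c * iter_deriv l g x)"
  using iter_deriv_lin[OF Ck_zero assms(1) assms(2), of c] by (simp add: iter_deriv_zero)

lemma sn_scale:
  assumes "f \<in> Ck_T k" "enat l \<le> k"
  shows "seminorm_T l (\<lambda>z. of_real t * f z) \<le> \<bar>t\<bar> * seminorm_T l f"
proof (rule sn_least)
  fix x
  have ck: "Ck_real k (circ_param f)" using assms(1) by (simp add: Ck_T_def)
  have "circ_param (\<lambda>z. of_real t * f z) = (\<lambda>x. of_real t * circ_param f x)" by (simp add: circ_param_def)
  then have "iter_deriv l (circ_param (\<lambda>z. of_real t * f z)) x = of_real t * iter_deriv l (circ_param f) x"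
    using iter_deriv_scale[OF ck assms(2)] by simp
  then have "cmod (iter_deriv l (circ_param (\<lambda>z. of_real t * f z)) x) = \<bar>t\<bar> * cmod (iter_deriv l (circ_param f) x)"
    by (simp add: norm_mult)
  also have "\<dots> \<le> \<bar>t\<bar> * seminorm_T l f" using sn_le[OF assms] by (intro mult_left_mono) auto
  finally show "cmod (iter_deriv l (circ_param (\<lambda>z. of_real t * f z)) x) \<le> \<bar>t\<bar> * seminorm_T l f" .
qed

lemma sphere_diff:
  assumes "v \<in> Ck_T k" "u \<in> Ck_T k" "z \<in> sphere 0 1"
  shows "cmod (v z - u z) \<le> seminorm_T 0 (v - u)"
proof -
  have vu: "v - u \<in> Ck_T k" by (rule CkT_diff[OF assms(1,2)])
  have "cmod (iter_deriv 0 (circ_param (v - u)) (Arg z)) \<le> seminorm_T 0 (v - u)"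
    by (rule sn_le[OF vu]) (simp add: zero_enat_def[symmetric])
  then show ?thesis using sphere_cis[OF assms(3)] by (simp add: circ_param_def)
qed

lemma P_set_mono: "r \<le> r' \<Longrightarrow> P_set z0 r \<subseteq> P_set z0 r'"
  unfolding P_set_def by auto

lemma not_U3_iff:
  "u \<in> Ck_T k \<Longrightarrow> u \<notin> U3 z0 k \<longleftrightarrow> (\<exists>r>0. \<exists>h.
       continuous_on (sphere 0 1 \<union> P_set z0 r) h \<and> h holomorphic_on P_set z0 r \<and>
       (\<forall>z \<in> ball z0 r \<inter> sphere 0 1. h z = u z))"
  unfolding U3_def by blast

lemma U3_dense:
  assumes z0: "cmod z0 = 1"
  shows "(Ck_topology k) closure_of (U3 z0 k) = topspace (Ck_topology k)"
proof (rule antisym)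
  show "Ck_topology k closure_of U3 z0 k \<subseteq> topspace (Ck_topology k)" by (rule closure_of_subset_topspace)
  show "topspace (Ck_topology k) \<subseteq> Ck_topology k closure_of U3 z0 k"
  proof
    fix u assume "u \<in> topspace (Ck_topology k)"
    then have u: "u \<in> Ck_T k" by (simp add: Ck_topspace)
    show "u \<in> Ck_topology k closure_of U3 z0 k"
      unfolding in_closure_of
    proof (intro conjI allI impI)
      show "u \<in> topspace (Ck_topology k)" using u by (simp add: Ck_topspace)
      fix T assume uT: "u \<in> T \<and> openin (Ck_topology k) T"
      show "\<exists>y. y \<in> U3 z0 k \<and> y \<in> T"
      proof (cases "u \<in> U3 z0 k")
        case True then show ?thesis using uT by blast
      next
        case False
        then obtain r1 h1 where r1: "r1 > 0" and h1c: "continuous_on (sphere 0 1 \<union> P_set z0 r1) h1"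
          and h1h: "h1 holomorphic_on P_set z0 r1" and h1v: "\<forall>z \<in> ball z0 r1 \<inter> sphere 0 1. h1 z = u z"
          using not_U3_iff[OF u] by blast
        obtain L \<epsilon> where \<epsilon>: "\<epsilon> > 0"
          and LT: "\<forall>v\<in>Ck_T k. (\<forall>l\<le>L. enat l \<le> k \<longrightarrow> seminorm_T l (v - u) < \<epsilon>) \<longrightarrow> v \<in> T"
          using Ck_nbhd[of k T u] uT by blast
        define f where "f = fz0 z0"
        have f: "f \<in> Ck_T k" unfolding f_def by (rule fz0_Ck[OF z0])
        define S where "S = (\<Sum>l\<le>L. \<bar>seminorm_T l f\<bar>) + 1"
        have S: "S > 0" unfolding S_def by (smt (verit) sum_nonneg abs_ge_zero)
        define t where "t = \<epsilon> / (2 * S)"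
        have t: "t > 0" unfolding t_def using \<epsilon> S by simp
        define v where "v = (\<lambda>z. u z + of_real t * f z)"
        have v: "v \<in> Ck_T k" unfolding v_def by (rule CkT_lin[OF u f])
        have vu: "v - u = (\<lambda>z. of_real t * f z)" unfolding v_def by auto
        have "\<forall>l\<le>L. enat l \<le> k \<longrightarrow> seminorm_T l (v - u) < \<epsilon>"
        proof (intro allI impI)
          fix l assume l: "l \<le> L" and lk: "enat l \<le> k"
          have "seminorm_T l (v - u) \<le> \<bar>t\<bar> * seminorm_T l f" unfolding vu by (rule sn_scale[OF f lk])
          also have "\<dots> \<le> t * S"
          proof -
            have "seminorm_T l f \<le> \<bar>seminorm_T l f\<bar>" by simp
            also have "\<dots> \<le> (\<Sum>l\<le>L. \<bar>seminorm_T l f\<bar>)"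
              by (rule member_le_sum[where f="\<lambda>l. \<bar>seminorm_T l f\<bar>"]) (use l in auto)
            also have "\<dots> \<le> S" unfolding S_def by simp
            finally show ?thesis using t by (simp add: mult_left_mono)
          qed
          also have "t * S = \<epsilon> / 2" unfolding t_def using S by simp
          also have "\<dots> < \<epsilon>" using \<epsilon> by simp
          finally show "seminorm_T l (v - u) < \<epsilon>" .
        qed
        then have "v \<in> T" using LT v by blast
        moreover have "v \<in> U3 z0 k"
        proof (rule ccontr)
          assume "v \<notin> U3 z0 k"
          then obtain r2 h2 where r2: "r2 > 0" and h2c: "continuous_on (sphere 0 1 \<union> P_set z0 r2) h2"
            and h2h: "h2 holomorphic_on P_set z0 r2" and h2v: "\<forall>z \<in> ball z0 r2 \<inter> sphere 0 1. h2 z = v z"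
            using not_U3_iff[OF v] by blast
          define r where "r = min r1 r2"
          have r: "r > 0" "r \<le> r1" "r \<le> r2" unfolding r_def using r1 r2 by auto
          have sub1: "sphere 0 1 \<union> P_set z0 r \<subseteq> sphere 0 1 \<union> P_set z0 r1" using P_set_mono[OF r(2)] by blast
          have sub2: "sphere 0 1 \<union> P_set z0 r \<subseteq> sphere 0 1 \<union> P_set z0 r2" using P_set_mono[OF r(3)] by blast
          have "\<exists>r>0. \<exists>h. continuous_on (sphere 0 1 \<union> P_set z0 r) h \<and> h holomorphic_on P_set z0 r \<and>
                 (\<forall>z \<in> ball z0 r \<inter> sphere 0 1. h z = fz0 z0 z)"
          proof (intro exI conjI ballI)
            show "r > 0" by (rule r(1))
            show "continuous_on (sphere 0 1 \<union> P_set z0 r) (\<lambda>z. (h2 z - h1 z) / of_real t)"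
              using continuous_on_subset[OF h1c sub1] continuous_on_subset[OF h2c sub2] t
              by (intro continuous_intros) auto
            show "(\<lambda>z. (h2 z - h1 z) / of_real t) holomorphic_on P_set z0 r"
              using holomorphic_on_subset[OF h1h P_set_mono[OF r(2)]] holomorphic_on_subset[OF h2h P_set_mono[OF r(3)]] t
              by (intro holomorphic_intros) auto
            fix z assume z: "z \<in> ball z0 r \<inter> sphere 0 1"
            then have "h1 z = u z" "h2 z = v z" using h1v h2v r by auto
            then show "(h2 z - h1 z) / of_real t = fz0 z0 z" unfolding v_def f_def using t by simp
          qed
          then show False using fz0_U3[OF z0, of k] not_U3_iff[OF fz0_Ck[OF z0, of k]] by blast
        qed
        ultimately show ?thesis by blast
      qed
    qed
  qed
qed


definition Fn :: "complex \<Rightarrow> enat \<Rightarrow> nat \<Rightarrow> (complex \<Rightarrow> complex) set" where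
  "Fn z0 k n = {u \<in> Ck_T k. \<exists>h. continuous_on (sphere 0 1 \<union> P_set z0 (1 / real (Suc n))) h \<and>
      h holomorphic_on P_set z0 (1 / real (Suc n)) \<and>
      (\<forall>z\<in>ball z0 (1 / real (Suc n)) \<inter> sphere 0 1. h z = u z) \<and>
      (\<forall>z\<in>ball z0 (1 / real (Suc n)) \<inter> cball 0 1. cmod (h z) \<le> real (Suc n))}"

lemma notU3_Fn:
  assumes u: "u \<in> Ck_T k" and nu: "u \<notin> U3 z0 k"
  shows "\<exists>n. u \<in> Fn z0 k n"
proof -
  obtain r h where r: "r > 0" and hc: "continuous_on (sphere 0 1 \<union> P_set z0 r) h"
    and hh: "h holomorphic_on P_set z0 r" and hv: "\<forall>z \<in> ball z0 r \<inter> sphere 0 1. h z = u z"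
    using not_U3_iff[OF u] nu by blast
  define K where "K = cball z0 (r/2) \<inter> cball 0 (1::real)"
  have KS: "K \<subseteq> sphere 0 1 \<union> P_set z0 r"
  proof
    fix w assume w: "w \<in> K"
    show "w \<in> sphere 0 1 \<union> P_set z0 r"
    proof (cases "cmod w = 1")
      case True then show ?thesis by simp
    next
      case False
      then have "cmod w < 1" using w unfolding K_def by auto
      moreover have "dist z0 w < r" using w r unfolding K_def by auto
      ultimately show ?thesis unfolding P_set_def by auto
    qed
  qed
  have Kc: "compact K" unfolding K_def by (intro compact_Int_closed) auto
  obtain B where B: "\<And>w. w \<in> K \<Longrightarrow> cmod (h w) \<le> B"
    using continuous_on_compact_bound[OF Kc continuous_on_subset[OF hc KS]] by blast
  define n where "n = nat \<lceil>max (2/r) B\<rceil>"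
  have n1: "real (Suc n) \<ge> 2/r" and n2: "real (Suc n) \<ge> B" unfolding n_def by linarith+
  have "1 / real (Suc n) \<le> 1 / (2/r)" using n1 r by (intro divide_left_mono) auto
  then have rn: "1 / real (Suc n) \<le> r/2" by simp
  then have rn': "1 / real (Suc n) \<le> r" using r by simp
  show ?thesis
  proof (intro exI[of _ n])
    show "u \<in> Fn z0 k n" unfolding Fn_def
    proof (intro CollectI conjI exI[of _ h] ballI)
      show "u \<in> Ck_T k" by (rule u)
      show "continuous_on (sphere 0 1 \<union> P_set z0 (1 / real (Suc n))) h"
        using continuous_on_subset[OF hc] P_set_mono[OF rn'] by blast
      show "h holomorphic_on P_set z0 (1 / real (Suc n))"
        using holomorphic_on_subset[OF hh P_set_mono[OF rn']] .
      fix z assume "z \<in> ball z0 (1 / real (Suc n)) \<inter> sphere 0 1"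
      then show "h z = u z" using hv rn' by auto
    next
      fix z assume "z \<in> ball z0 (1 / real (Suc n)) \<inter> cball 0 1"
      then have "z \<in> K" unfolding K_def using rn by auto
      then show "cmod (h z) \<le> real (Suc n)" using B n2 by force
    qed
  qed
qed

lemma closure_Fn:
  assumes z0: "cmod z0 = 1" and uc: "u \<in> (Ck_topology k) closure_of (Fn z0 k n)"
  shows "u \<notin> U3 z0 k"
proof -
  have "u \<in> topspace (Ck_topology k)" using uc by (simp add: in_closure_of)
  then have u: "u \<in> Ck_T k" by (simp add: Ck_topspace)
  have k0: "enat 0 \<le> k" by (simp add: zero_enat_def[symmetric])
  have cl0: "\<forall>T. u \<in> T \<and> openin (Ck_topology k) T \<longrightarrow> (\<exists>y. y \<in> Fn z0 k n \<and> y \<in> T)"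
    using uc unfolding in_closure_of by (rule conjunct2)
  have cl: "\<exists>y. y \<in> Fn z0 k n \<and> y \<in> T" if "u \<in> T" "openin (Ck_topology k) T" for T
    using cl0 that by blast
  have ex: "\<forall>j. \<exists>v. v \<in> Fn z0 k n \<and> seminorm_T 0 (v - u) < 1 / real (Suc j)"
  proof
    fix j
    have op: "openin (Ck_topology k) {v \<in> Ck_T k. seminorm_T 0 (v - u) < 1 / real (Suc j)}"
      by (rule Ck_basis_open[OF k0 u]) simp
    have mem: "u \<in> {v \<in> Ck_T k. seminorm_T 0 (v - u) < 1 / real (Suc j)}" using u by (simp add: sn_zero)
    obtain y where "y \<in> Fn z0 k n" "y \<in> {v \<in> Ck_T k. seminorm_T 0 (v - u) < 1 / real (Suc j)}"
      using cl[OF mem op] by blast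
    then show "\<exists>v. v \<in> Fn z0 k n \<and> seminorm_T 0 (v - u) < 1 / real (Suc j)" by blast
  qed
  from choice[OF ex] obtain vs where vs0: "\<forall>j. vs j \<in> Fn z0 k n \<and> seminorm_T 0 (vs j - u) < 1 / real (Suc j)"
    by blast
  then have vs: "\<And>j. vs j \<in> Fn z0 k n" "\<And>j. seminorm_T 0 (vs j - u) < 1 / real (Suc j)" by auto
  define R where "R = 1 / real (Suc n)"
  have exh: "\<forall>j. \<exists>h. continuous_on (sphere 0 1 \<union> P_set z0 R) h \<and> h holomorphic_on P_set z0 R \<and>
      (\<forall>z\<in>ball z0 R \<inter> sphere 0 1. h z = vs j z) \<and> (\<forall>z\<in>ball z0 R \<inter> cball 0 1. cmod (h z) \<le> real (Suc n))"
  proof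
    fix j show "\<exists>h. continuous_on (sphere 0 1 \<union> P_set z0 R) h \<and> h holomorphic_on P_set z0 R \<and>
      (\<forall>z\<in>ball z0 R \<inter> sphere 0 1. h z = vs j z) \<and> (\<forall>z\<in>ball z0 R \<inter> cball 0 1. cmod (h z) \<le> real (Suc n))"
      using vs(1)[of j] unfolding Fn_def R_def by blast
  qed
  from choice[OF exh] obtain hs where hall: "\<forall>j. continuous_on (sphere 0 1 \<union> P_set z0 R) (hs j) \<and> hs j holomorphic_on P_set z0 R \<and>
      (\<forall>z\<in>ball z0 R \<inter> sphere 0 1. hs j z = vs j z) \<and> (\<forall>z\<in>ball z0 R \<inter> cball 0 1. cmod (hs j z) \<le> real (Suc n))"
    by blast
  then have hc: "\<And>j. continuous_on (sphere 0 1 \<union> P_set z0 R) (hs j)"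
    and hh: "\<And>j. hs j holomorphic_on P_set z0 R"
    and hv: "\<And>j z. z \<in> ball z0 R \<inter> sphere 0 1 \<Longrightarrow> hs j z = vs j z"
    and hb: "\<And>j z. z \<in> ball z0 R \<inter> cball 0 1 \<Longrightarrow> cmod (hs j z) \<le> real (Suc n)"
    by auto
  have vsC: "vs j \<in> Ck_T k" for j using vs(1)[of j] unfolding Fn_def by blast
  define \<rho> where "\<rho> = R / 2"
  have R: "R > 0" "R \<le> 1" unfolding R_def by auto
  have \<rho>: "\<rho> > 0" "\<rho> \<le> 1" "\<rho> < R" unfolding \<rho>_def using R by auto
  have L1: "cball z0 \<rho> \<inter> cball 0 1 \<subseteq> sphere 0 1 \<union> P_set z0 R"
  proof
    fix w assume w: "w \<in> cball z0 \<rho> \<inter> cball 0 1"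
    show "w \<in> sphere 0 1 \<union> P_set z0 R"
    proof (cases "cmod w = 1")
      case True then show ?thesis by simp
    next
      case False
      then have "cmod w < 1" using w by auto
      moreover have "dist z0 w < R" using w \<rho> by auto
      ultimately show ?thesis unfolding P_set_def by auto
    qed
  qed
  have L2: "ball z0 \<rho> \<inter> ball 0 1 \<subseteq> P_set z0 R" unfolding P_set_def using \<rho> by auto
  have L3: "cball z0 \<rho> \<inter> cball 0 1 \<subseteq> ball z0 R \<inter> cball 0 1" using \<rho> by auto
  obtain H where Hc: "continuous_on (cball z0 (\<rho>^2/4) \<inter> cball 0 1) H"
    and Hh: "H holomorphic_on (ball z0 (\<rho>^2/4) \<inter> ball 0 1)"
    and Hv: "\<forall>z\<in>cball z0 (\<rho>^2/4) \<inter> sphere 0 1. H z = u z"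
  proof -
    have "\<exists>H. continuous_on (cball z0 (\<rho>^2/4) \<inter> cball 0 1) H \<and>
             H holomorphic_on (ball z0 (\<rho>^2/4) \<inter> ball 0 1) \<and>
             (\<forall>z\<in>cball z0 (\<rho>^2/4) \<inter> sphere 0 1. H z = u z)"
    proof (rule lens_limit[OF z0 \<rho>(1) \<rho>(2)])
      show "continuous_on (cball z0 \<rho> \<inter> cball 0 1) (hs j)" for j
        using continuous_on_subset[OF hc L1] .
      show "hs j holomorphic_on (ball z0 \<rho> \<inter> ball 0 1)" for j
        using holomorphic_on_subset[OF hh L2] .
      show "cmod (hs j z) \<le> real (Suc n)" if "z \<in> cball z0 \<rho> \<inter> cball 0 1" for j z
        using hb L3 that by blast
      fix \<epsilon> :: real assume \<epsilon>: "\<epsilon> > 0"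
      obtain N where N: "N \<noteq> 0" "inverse (real N) < \<epsilon>" using real_arch_inverse \<epsilon> by blast
      show "\<exists>N. \<forall>j\<ge>N. \<forall>z\<in>cball z0 \<rho> \<inter> sphere 0 1. cmod (hs j z - u z) < \<epsilon>"
      proof (intro exI[of _ N] allI impI ballI)
        fix j z assume j: "N \<le> j" and z: "z \<in> cball z0 \<rho> \<inter> sphere 0 1"
        have "hs j z = vs j z" using hv z \<rho> by auto
        then have "cmod (hs j z - u z) \<le> seminorm_T 0 (vs j - u)"
          using sphere_diff[OF vsC u] z by auto
        also have "\<dots> < 1 / real (Suc j)" by (rule vs(2))
        also have "1 / real (Suc j) \<le> inverse (real N)" using j N
          by (simp add: inverse_eq_divide frac_le)
        finally show "cmod (hs j z - u z) < \<epsilon>" using N by simp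
      qed
    qed
    then show ?thesis using that by blast
  qed
  define K1 where "K1 = cball z0 (\<rho>^2/4) \<inter> cball 0 (1::real)"
  define h where "h = (\<lambda>z. if z \<in> K1 then H z else u z)"
  have hcK: "continuous_on (K1 \<union> sphere 0 1) h"
    unfolding h_def
    by (rule continuous_on_cases) (use Hc u_cont_sphere[OF u] Hv in \<open>auto simp: K1_def\<close>)
  have r': "\<rho>^2/4 > 0" using \<rho> by simp
  show ?thesis unfolding not_U3_iff[OF u]
  proof (intro exI[of _ "\<rho>^2/4"] exI[of _ h] conjI ballI r')
    have "sphere 0 1 \<union> P_set z0 (\<rho>^2/4) \<subseteq> K1 \<union> sphere 0 1" unfolding P_set_def K1_def by auto
    then show "continuous_on (sphere 0 1 \<union> P_set z0 (\<rho>^2/4)) h" using continuous_on_subset[OF hcK] by blast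
    show "h holomorphic_on P_set z0 (\<rho>^2/4)"
    proof (rule holomorphic_transform[of H])
      show "H holomorphic_on P_set z0 (\<rho>^2/4)" using Hh unfolding P_set_def .
      fix z assume "z \<in> P_set z0 (\<rho>^2/4)"
      then have "z \<in> K1" unfolding P_set_def K1_def by auto
      then show "H z = h z" unfolding h_def by simp
    qed
    fix z assume z: "z \<in> ball z0 (\<rho>^2/4) \<inter> sphere 0 1"
    then have "z \<in> K1" unfolding K1_def by auto
    then show "h z = u z" unfolding h_def using Hv z by auto
  qed
qed

theorem main_thm:
  fixes z0 :: complex and k :: enat
  assumes "z0 \<in> sphere 0 1"
  shows "gdelta_in (Ck_topology k) (U3 z0 k) \<and>
         (Ck_topology k) closure_of (U3 z0 k) = topspace (Ck_topology k)"
proof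
  have z0: "cmod z0 = 1" using assms by simp
  show "(Ck_topology k) closure_of (U3 z0 k) = topspace (Ck_topology k)" by (rule U3_dense[OF z0])
  define X where "X = Ck_topology k"
  define Op where "Op n = topspace X - X closure_of (Fn z0 k n)" for n
  have eq: "U3 z0 k = \<Inter> (range Op)"
  proof
    show "U3 z0 k \<subseteq> \<Inter> (range Op)"
    proof
      fix u assume uU: "u \<in> U3 z0 k"
      then have "u \<in> topspace X" unfolding X_def Ck_topspace U3_def by blast
      then show "u \<in> \<Inter> (range Op)" unfolding Op_def X_def using closure_Fn[OF z0] uU by blast
    qed
    show "\<Inter> (range Op) \<subseteq> U3 z0 k"
    proof
      fix u assume uO: "u \<in> \<Inter> (range Op)"
      then have uT: "u \<in> Ck_T k" unfolding Op_def X_def Ck_topspace by blast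
      show "u \<in> U3 z0 k"
      proof (rule ccontr)
        assume "u \<notin> U3 z0 k"
        then obtain n where n: "u \<in> Fn z0 k n" using notU3_Fn[OF uT] by blast
        have "Fn z0 k n \<subseteq> topspace X" unfolding X_def Ck_topspace Fn_def by blast
        then have "u \<in> X closure_of (Fn z0 k n)" using closure_of_subset n by blast
        then show False using uO unfolding Op_def by blast
      qed
    qed
  qed
  have "gdelta_in X (\<Inter> (range Op))"
  proof (rule gdelta_in_Inter)
    show "countable (range Op)" by simp
    show "range Op \<noteq> {}" by simp
    fix S assume "S \<in> range Op"
    then obtain n where "S = Op n" by blast
    then show "gdelta_in X S" unfolding Op_def
      by (intro open_imp_gdelta_in openin_diff) auto
  qed
  then show "gdelta_in (Ck_topology k) (U3 z0 k)" using eq unfolding X_def by simp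
qed


theorem theorem3p14:
  fixes z0 :: complex and k :: enat
  assumes "z0 \<in> sphere 0 1"
  shows "gdelta_in (Ck_topology k) (U3 z0 k) \<and>
         (Ck_topology k) closure_of (U3 z0 k) = topspace (Ck_topology k)"
  by (rule main_thm[OF assms])

end
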